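(* Let $q$ be a prime power with $q\equiv 1 \pmod 3$, let $\delta\in\mathbb{F}_q$ be a cubic nonresidue, and let $\mathbb{F}_q(\delta^{1/3})$ be the cubic extension with $\mathbb{F}_q$-basis $\{1,\delta^{1/3},\delta^{2/3}\}$; write $\alpha=\alpha_1+\alpha_2\delta^{1/3}+\alpha_3\delta^{2/3}$ with $\alpha_i\in\mathbb{F}_q$. Let $\mathbb{H}_q=\{(\alpha,\beta)\in \mathbb{F}_q(\delta^{1/3})^2 : \alpha_2\beta_3-\alpha_3\beta_2\neq 0\}$ with the action of $\mathrm{GL}_3(\mathbb{F}_q)$ given by \[ \begin{bmatrix} a & b & c\\ d & e & f\\ r & s & t \end{bmatrix} (\alpha,\beta) = \left(\frac{a\alpha+b\beta+c}{r\alpha+s\beta+t}, \frac{d\alpha+e\beta+f}{r\alpha+s\beta+t} \right). \] Let $H$ be the subgroup \[H=\left\{\begin{bmatrix} x & y & 0\\ w & z & 0\\ 0 & 0 & t\end{bmatrix}\in\mathrm{GL}_3(\mathbb{F}_q)\right\}\cong \mathrm{GL}_2(\mathbb{F}_q)\times\mathbb{F}_q^\times\] (the centralizer in $\mathrm{GL}_3(\mathbb{F}_q)$ of $\mathrm{diag}(a,a,b)$ with $a\neq b$). Then the set \[\{(u+\delta^{1/3},\,v+\delta^{2/3}) : u,v\in\mathbb{F}_q\}\] is a fundamental domain for the action of $H$ on $\mathbb{H}_q$.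
   Context: A fundamental domain for the action of a subgroup $H$ on $\mathbb{H}_q$ is a subset of $\mathbb{H}_q$ containing exactly one element of each $H$-orbit. A cubic nonresidue is an element of $\mathbb{F}_q^\times$ that is not a cube in $\mathbb{F}_q$. *)

theory Defs
  imports "HOL-Analysis.Analysis"
begin

text \<open>Elements of the cubic extension F_q(delta^(1/3)) are represented by their
  coordinate triples (a1,a2,a3) w.r.t. the F_q-basis 1, delta^(1/3), delta^(2/3).\<close>

type_synonym 'a cub = "'a \<times> 'a \<times> 'a"

definition cubic_nonresidue :: "'a::field \<Rightarrow> bool" where
  "cubic_nonresidue d \<longleftrightarrow> d \<noteq> 0 \<and> \<not> (\<exists>x. x ^ 3 = d)"

definition cadd :: "'a::field cub \<Rightarrow> 'a cub \<Rightarrow> 'a cub" where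
  "cadd x y = (case x of (a1,a2,a3) \<Rightarrow> case y of (b1,b2,b3) \<Rightarrow> (a1+b1, a2+b2, a3+b3))"

definition csmult :: "'a::field \<Rightarrow> 'a cub \<Rightarrow> 'a cub" where
  "csmult c x = (case x of (a1,a2,a3) \<Rightarrow> (c*a1, c*a2, c*a3))"

definition cconst :: "'a::field \<Rightarrow> 'a cub" where
  "cconst c = (c, 0, 0)"

text \<open>Multiplication using (delta^(1/3))^3 = delta.\<close>
definition cmult :: "'a::field \<Rightarrow> 'a cub \<Rightarrow> 'a cub \<Rightarrow> 'a cub" where
  "cmult d x y = (case x of (a1,a2,a3) \<Rightarrow> case y of (b1,b2,b3) \<Rightarrow>
     (a1*b1 + d*(a2*b3 + a3*b2), a1*b2 + a2*b1 + d*(a3*b3), a1*b3 + a2*b2 + a3*b1))"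

definition cdiv :: "'a::field \<Rightarrow> 'a cub \<Rightarrow> 'a cub \<Rightarrow> 'a cub" where
  "cdiv d x y = (THE z. cmult d y z = x)"

definition Hq :: "('a::field cub \<times> 'a cub) set" where
  "Hq = {(\<alpha>, \<beta>). fst (snd \<alpha>) * snd (snd \<beta>) - snd (snd \<alpha>) * fst (snd \<beta>) \<noteq> 0}"

definition crow :: "'a::field ^3^3 \<Rightarrow> 3 \<Rightarrow> 'a cub \<Rightarrow> 'a cub \<Rightarrow> 'a cub" where
  "crow g i \<alpha> \<beta> = cadd (cadd (csmult (g$i$1) \<alpha>) (csmult (g$i$2) \<beta>)) (cconst (g$i$3))"

definition act :: "'a::field \<Rightarrow> 'a ^3^3 \<Rightarrow> 'a cub \<times> 'a cub \<Rightarrow> 'a cub \<times> 'a cub" where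
  "act d g p = (case p of (\<alpha>, \<beta>) \<Rightarrow>
     (cdiv d (crow g 1 \<alpha> \<beta>) (crow g 3 \<alpha> \<beta>), cdiv d (crow g 2 \<alpha> \<beta>) (crow g 3 \<alpha> \<beta>)))"

definition GL3 :: "('a::field ^3^3) set" where
  "GL3 = {g. invertible g}"

definition Hsub :: "('a::field ^3^3) set" where
  "Hsub = {g \<in> GL3. g$1$3 = 0 \<and> g$2$3 = 0 \<and> g$3$1 = 0 \<and> g$3$2 = 0}"

definition fundamental_domain ::
    "('g \<Rightarrow> 'x \<Rightarrow> 'x) \<Rightarrow> 'g set \<Rightarrow> 'x set \<Rightarrow> 'x set \<Rightarrow> bool" where
  "fundamental_domain f G X D \<longleftrightarrow> D \<subseteq> X \<and>
     (\<forall>x\<in>X. \<exists>!y\<in>D. \<exists>g\<in>G. f g x = y)"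

end

theory Submission
  imports Defs
begin

lemma cdiv_const:
  fixes t :: "'a::field"
  assumes "t \<noteq> 0"
  shows "cdiv d (x1,x2,x3) (t,0,0) = (x1/t, x2/t, x3/t)"
  unfolding cdiv_def
proof (rule the_equality)
  show "cmult d (t, 0, 0) (x1 / t, x2 / t, x3 / t) = (x1, x2, x3)"
    using assms by (simp add: cmult_def)
next
  fix z assume "cmult d (t, 0, 0) z = (x1, x2, x3)"
  then show "z = (x1 / t, x2 / t, x3 / t)"
    using assms by (cases z) (auto simp: cmult_def field_simps)
qed

lemma Hsub_det:
  assumes "(g::'a::field^3^3) \<in> Hsub"
  shows "g$3$3 \<noteq> 0" "g$1$1 * g$2$2 - g$1$2 * g$2$1 \<noteq> 0"
proof -
  have "det g \<noteq> 0" using assms by (simp add: Hsub_def GL3_def invertible_det_nz)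
  moreover have "det g = g$3$3 * (g$1$1 * g$2$2 - g$1$2 * g$2$1)"
    using assms by (simp add: Hsub_def det_3 algebra_simps)
  ultimately show "g$3$3 \<noteq> 0" "g$1$1 * g$2$2 - g$1$2 * g$2$1 \<noteq> 0" by auto
qed

lemma act_H:
  assumes "(g::'a::field^3^3) \<in> Hsub"
  shows "act d g ((a1,a2,a3),(b1,b2,b3)) =
    (((g$1$1*a1 + g$1$2*b1)/g$3$3, (g$1$1*a2 + g$1$2*b2)/g$3$3, (g$1$1*a3 + g$1$2*b3)/g$3$3),
     ((g$2$1*a1 + g$2$2*b1)/g$3$3, (g$2$1*a2 + g$2$2*b2)/g$3$3, (g$2$1*a3 + g$2$2*b3)/g$3$3))"
proof -
  have z: "g$1$3 = 0" "g$2$3 = 0" "g$3$1 = 0" "g$3$2 = 0" using assms by (auto simp: Hsub_def)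
  have t: "g$3$3 \<noteq> 0" using Hsub_det[OF assms] by simp
  show ?thesis
    by (simp add: act_def crow_def cadd_def csmult_def cconst_def z cdiv_const[OF t])
qed

theorem proposition4p1:
  fixes \<delta> :: "'a::{finite, field}"
  assumes "CARD('a) mod 3 = 1"
    and "cubic_nonresidue \<delta>"
  shows "fundamental_domain (act \<delta>) (Hsub :: ('a ^3^3) set) Hq
           {((u, 1, 0), (v, 0, 1)) | u v. True}"
  unfolding fundamental_domain_def
proof (intro conjI ballI)
  show "{((u, 1, 0), (v, 0, 1)) | u v. True} \<subseteq> (Hq :: ('a cub \<times> 'a cub) set)"
    by (auto simp: Hq_def)
next
  fix p :: "'a cub \<times> 'a cub" assume "p \<in> Hq"
  obtain a1 a2 a3 b1 b2 b3 where p: "p = ((a1,a2,a3),(b1,b2,b3))" by (cases p) auto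
  define D where "D = a2*b3 - a3*b2"
  have D: "D \<noteq> 0" using \<open>p \<in> Hq\<close> by (simp add: p Hq_def D_def)
  define u0 where "u0 = (b3*a1 - a3*b1)/D"
  define v0 where "v0 = (a2*b1 - b2*a1)/D"
  define g0 :: "'a^3^3" where "g0 = vector [vector [b3/D, -a3/D, 0], vector [-b2/D, a2/D, 0], vector [0,0,1]]"
  have g0H: "g0 \<in> Hsub"
  proof -
    have "det g0 = (b3/D)*(a2/D) - (-a3/D)*(-b2/D)"
      by (simp add: g0_def det_3 vector_3)
    also have "\<dots> = (a2*b3 - a3*b2)/(D*D)" using D by (simp add: field_simps)
    also have "\<dots> = 1/D" using D by (simp add: D_def[symmetric])
    finally have "det g0 \<noteq> 0" using D by simp
    then show ?thesis
      by (simp add: Hsub_def GL3_def invertible_det_nz g0_def vector_3)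
  qed
  have ex: "act \<delta> g0 p = ((u0,1,0),(v0,0,1))"
  proof -
    have c1: "b3 / D * a2 + - a3 / D * b2 = 1"
    proof -
      have "b3 / D * a2 + - a3 / D * b2 = (a2*b3 - a3*b2)/D" using D by (simp add: field_simps)
      then show ?thesis using D by (simp add: D_def[symmetric])
    qed
    have c2: "b3 / D * a3 + - a3 / D * b3 = 0" by (simp add: field_simps)
    have c3: "- b2 / D * a2 + a2 / D * b2 = 0" by (simp add: field_simps)
    have c4: "- b2 / D * a3 + a2 / D * b3 = 1"
    proof -
      have "- b2 / D * a3 + a2 / D * b3 = (a2*b3 - a3*b2)/D" using D by (simp add: field_simps)
      then show ?thesis using D by (simp add: D_def[symmetric])
    qed
    have c5: "b3 / D * a1 + - a3 / D * b1 = u0" using D by (simp add: u0_def field_simps)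
    have c6: "- b2 / D * a1 + a2 / D * b1 = v0" using D by (simp add: v0_def field_simps)
    show ?thesis
      unfolding p act_H[OF g0H] using c1 c2 c3 c4 c5 c6 by (simp add: g0_def vector_3)
  qed
  have uniq: "y = ((u0,1,0),(v0,0,1))" if yD: "y \<in> {((u, 1, 0), (v, 0, 1)) | u v. True}" and gH:
     "g \<in> Hsub" and ga: "act \<delta> g p = y" for y g
  proof -
    obtain u v where y: "y = ((u, 1, 0), (v, 0, 1))" using yD by auto
    define t where "t = g$3$3"
    have t: "t \<noteq> 0" using Hsub_det[OF gH] t_def by simp
    have e: "(g$1$1*a1 + g$1$2*b1)/t = u" "(g$1$1*a2 + g$1$2*b2)/t = 1" "(g$1$1*a3 + g$1$2*b3)/t = 0"
         "(g$2$1*a1 + g$2$2*b1)/t = v" "(g$2$1*a2 + g$2$2*b2)/t = 0" "(g$2$1*a3 + g$2$2*b3)/t = 1"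
    proof -
      have E: "(((g$1$1*a1 + g$1$2*b1)/t, (g$1$1*a2 + g$1$2*b2)/t, (g$1$1*a3 + g$1$2*b3)/t),
     ((g$2$1*a1 + g$2$2*b1)/t, (g$2$1*a2 + g$2$2*b2)/t, (g$2$1*a3 + g$2$2*b3)/t)) = ((u, 1, 0), (v, 0, 1))"
        using ga unfolding p y act_H[OF gH] t_def .
      then show "(g$1$1*a1 + g$1$2*b1)/t = u" "(g$1$1*a2 + g$1$2*b2)/t = 1" "(g$1$1*a3 + g$1$2*b3)/t = 0"
         "(g$2$1*a1 + g$2$2*b1)/t = v" "(g$2$1*a2 + g$2$2*b2)/t = 0" "(g$2$1*a3 + g$2$2*b3)/t = 1"
        unfolding prod.inject by blast+
    qed
    define x where "x = g$1$1/t"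
    define yy where "yy = g$1$2/t"
    define w where "w = g$2$1/t"
    define z where "z = g$2$2/t"
    have e2: "x*a1 + yy*b1 = u" "x*a2 + yy*b2 = 1" "x*a3 + yy*b3 = 0"
         "w*a1 + z*b1 = v" "w*a2 + z*b2 = 0" "w*a3 + z*b3 = 1"
      using e t by (simp_all add: x_def yy_def w_def z_def add_divide_distrib)
    have xD: "x * D = b3"
    proof -
      have "x*D = b3*(x*a2+yy*b2) - b2*(x*a3+yy*b3)" by (simp add: D_def algebra_simps)
      then show ?thesis using e2 by simp
    qed
    have yD: "yy * D = - a3"
    proof -
      have "yy*D = a2*(x*a3+yy*b3) - a3*(x*a2+yy*b2)" by (simp add: D_def algebra_simps)
      then show ?thesis using e2 by simp
    qed
    have wD: "w * D = - b2"
    proof -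
      have "w*D = b3*(w*a2+z*b2) - b2*(w*a3+z*b3)" by (simp add: D_def algebra_simps)
      then show ?thesis using e2 by simp
    qed
    have zD: "z * D = a2"
    proof -
      have "z*D = a2*(w*a3+z*b3) - a3*(w*a2+z*b2)" by (simp add: D_def algebra_simps)
      then show ?thesis using e2 by simp
    qed
    have "u * D = b3*a1 - a3*b1"
    proof -
      have "u*D = (x*a1 + yy*b1)*D" using e2(1) by simp
      also have "\<dots> = (x*D)*a1 + (yy*D)*b1" by (simp add: algebra_simps)
      finally have "u*D = (x*D)*a1 + (yy*D)*b1" .
      then show ?thesis using xD yD by simp
    qed
    then have "u = u0" using D by (simp add: u0_def field_simps)
    have "v * D = a2*b1 - b2*a1"
    proof -
      have "v * D = (w*a1 + z*b1)*D" using e2(4) by simp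
      also have "\<dots> = (w*D)*a1 + (z*D)*b1" by (simp add: algebra_simps)
      finally have "v * D = (w*D)*a1 + (z*D)*b1" .
      then show ?thesis using wD zD by simp
    qed
    then have "v = v0" using D by (simp add: v0_def field_simps)
    show ?thesis using y \<open>u = u0\<close> \<open>v = v0\<close> by simp
  qed
  show "\<exists>!y\<in>{((u, 1, 0), (v, 0, 1)) | u v. True}. \<exists>g\<in>Hsub. act \<delta> g p = y"
    using ex g0H uniq by blast
qed

end
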